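(* Let $P$ be a finite poset and $R$ a consistent restriction function on $P$. Then there is a bijection between the set of meet-irreducible elements of the lattice $\mathrm{Inc}^R(P)$ and the set of pairs $(p,k)$ with $p\in P$ and $k\in R(p)\setminus\{\max R(p)\}$.
   Context: A restriction function assigns to each $p\in P$ a nonempty finite set $R(p)\subseteq\mathbb{Z}$. $\mathrm{Inc}^R(P)$ is the set of $f:P\to\mathbb{Z}$ with $f(p)\in R(p)$ and $p_1<p_2\Rightarrow f(p_1)<f(p_2)$, ordered by $f\le g$ iff $f(p)\le g(p)$ for all $p$; it is a distributive lattice with pointwise min and max as meet and join. An element $x$ is meet-irreducible if it is not the top element and $x=y\wedge z$ implies $x\in\{y,z\}$. $R$ is consistent if for every cover $x\lessdot y$ in $P$, $\min R(x)<\min R(y)$ and $\max R(x)<\max R(y)$. *)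

theory Defs
  imports Main
begin

text \<open>A finite poset P is modelled as a finite type with a partial order.
  A restriction function assigns to each element a set of integers.\<close>

definition covers :: "'a::order \<Rightarrow> 'a \<Rightarrow> bool" where
  "covers x y \<longleftrightarrow> x < y \<and> \<not> (\<exists>z. x < z \<and> z < y)"

definition restriction :: "('a \<Rightarrow> int set) \<Rightarrow> bool" where
  "restriction R \<longleftrightarrow> (\<forall>p. finite (R p) \<and> R p \<noteq> {})"

definition consistent :: "('a::order \<Rightarrow> int set) \<Rightarrow> bool" where
  "consistent R \<longleftrightarrow> (\<forall>x y. covers x y \<longrightarrow> Min (R x) < Min (R y) \<and> Max (R x) < Max (R y))"

text \<open>Inc^R(P), ordered pointwise (the standard order on functions).\<close>
definition Inc :: "('a::order \<Rightarrow> int set) \<Rightarrow> ('a \<Rightarrow> int) set" where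
  "Inc R = {f. (\<forall>p. f p \<in> R p) \<and> (\<forall>p q. p < q \<longrightarrow> f p < f q)}"

text \<open>Meet-irreducible elements of a lattice L of functions with pointwise meet (inf).
  Not the top element means: some element of L is not below x.\<close>
definition meet_irreducible :: "('a \<Rightarrow> int) set \<Rightarrow> ('a \<Rightarrow> int) \<Rightarrow> bool" where
  "meet_irreducible L x \<longleftrightarrow> x \<in> L \<and> \<not> (\<forall>y\<in>L. y \<le> x) \<and>
     (\<forall>y\<in>L. \<forall>z\<in>L. x = inf y z \<longrightarrow> x = y \<or> x = z)"

end

theory Submission
  imports Defs
begin

lemma chain_mono:
  fixes F :: "'a::{finite,order} \<Rightarrow> int"
  assumes cov: "\<And>x y. covers x y \<Longrightarrow> F x < F y"
  shows "x < y \<Longrightarrow> F x < F y"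
proof (induction "card {z. x < z \<and> z < y}" arbitrary: x y rule: less_induct)
  case (less x y)
  show ?case
  proof (cases "covers x y")
    case True then show ?thesis using cov by blast
  next
    case False
    then obtain z where z: "x < z" "z < y" using less.prems unfolding covers_def by blast
    have "card {w. x < w \<and> w < z} < card {w. x < w \<and> w < y}"
      by (rule psubset_card_mono) (use z in \<open>auto intro: order.strict_trans\<close>)
    moreover have "card {w. z < w \<and> w < y} < card {w. x < w \<and> w < y}"
      by (rule psubset_card_mono) (use z in \<open>auto intro: order.strict_trans\<close>)
    ultimately have "F x < F z" "F z < F y" using less.hyps z by blast+
    then show ?thesis by simp
  qed
qed

definition raisable :: "('a::order \<Rightarrow> int set) \<Rightarrow> ('a \<Rightarrow> int) \<Rightarrow> 'a \<Rightarrow> bool" where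
  "raisable R f x \<longleftrightarrow> (\<exists>v. f x < v \<and> f(x := v) \<in> Inc R)"

lemma Inc_sup: "f \<in> Inc R \<Longrightarrow> g \<in> Inc R \<Longrightarrow> sup f g \<in> Inc R"
proof -
  assume f: "f \<in> Inc R" and g: "g \<in> Inc R"
  show ?thesis unfolding Inc_def
  proof (intro CollectI conjI allI impI)
    fix p show "sup f g p \<in> R p" using f g unfolding Inc_def by (simp add: sup_int_def max_def)
  next
    fix p q :: 'a assume "p < q"
    then have "f p < f q" "g p < g q" using f g unfolding Inc_def by auto
    then show "sup f g p < sup f g q" by (auto simp: sup_int_def max_def)
  qed
qed

lemma Inc_inf: "f \<in> Inc R \<Longrightarrow> g \<in> Inc R \<Longrightarrow> inf f g \<in> Inc R"
proof -
  assume f: "f \<in> Inc R" and g: "g \<in> Inc R"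
  show ?thesis unfolding Inc_def
  proof (intro CollectI conjI allI impI)
    fix p show "inf f g p \<in> R p" using f g unfolding Inc_def by (simp add: inf_int_def min_def)
  next
    fix p q :: 'a assume "p < q"
    then have "f p < f q" "g p < g q" using f g unfolding Inc_def by auto
    then show "inf f g p < inf f g q" by (simp add: inf_int_def min_less_iff_disj)
  qed
qed

lemma one_coord:
  fixes f g :: "'a::{finite,order} \<Rightarrow> int"
  assumes f: "f \<in> Inc R" and g: "g \<in> Inc R" and le: "f \<le> g" and ne: "f \<noteq> g"
  shows "\<exists>x. f x < g x \<and> f(x := g x) \<in> Inc R"
proof -
  let ?S = "{y. f y < g y}"
  obtain y0 where "f y0 \<noteq> g y0" using ne by (auto simp: fun_eq_iff)
  moreover have "f y0 \<le> g y0" using le by (rule le_funD)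
  ultimately have "y0 \<in> ?S" by simp
  then have "?S \<noteq> {}" by blast
  moreover have "finite ?S" by simp
  ultimately obtain x where x: "x \<in> ?S" and mx: "\<forall>b\<in>?S. x \<le> b \<longrightarrow> x = b"
    using finite_has_maximal[of ?S] by blast
  have "f(x := g x) \<in> Inc R"
    unfolding Inc_def
  proof (intro CollectI conjI allI impI)
    fix p show "(f(x := g x)) p \<in> R p" using f g unfolding Inc_def by auto
  next
    fix p q :: 'a assume pq: "p < q"
    show "(f(x := g x)) p < (f(x := g x)) q"
    proof (cases "p = x")
      case True
      then have "q \<noteq> x" using pq by auto
      have "\<not> f q < g q"
      proof
        assume "f q < g q"
        then have "q \<in> ?S" by simp
        then have "x = q" using mx True pq by (simp add: order_less_imp_le)
        then show False using \<open>q \<noteq> x\<close> by simp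
      qed
      moreover have "f q \<le> g q" using le by (rule le_funD)
      ultimately have "f q = g q" by simp
      moreover have "g x < g q" using g pq True unfolding Inc_def by auto
      ultimately show ?thesis using True \<open>q \<noteq> x\<close> by auto
    next
      case False
      show ?thesis
      proof (cases "q = x")
        case True
        have "f p < f x" using f pq True unfolding Inc_def by auto
        then show ?thesis using x True False by auto
      next
        case False2: False
        then show ?thesis using f pq False unfolding Inc_def by auto
      qed
    qed
  qed
  then show ?thesis using x by auto
qed

lemma unique_max:
  fixes m :: "'a::{finite,order} \<Rightarrow> int"
  assumes m: "m \<in> Inc R" and u: "\<And>x. raisable R m x \<Longrightarrow> x = p"
    and f: "f \<in> Inc R" and fp: "f p \<le> m p"
  shows "f \<le> m"
proof (rule ccontr)
  assume nle: "\<not> f \<le> m"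
  let ?g = "sup m f"
  have g: "?g \<in> Inc R" using Inc_sup m f by blast
  have "m \<noteq> ?g"
  proof
    assume eq: "m = ?g"
    have "f \<le> m" by (subst eq) (rule sup.cobounded2)
    then show False using nle by simp
  qed
  then obtain x where x: "m x < ?g x" "m(x := ?g x) \<in> Inc R"
    using one_coord[OF m g] by auto
  then have "raisable R m x" unfolding raisable_def by auto
  then have "x = p" using u by blast
  then show False using x fp by (simp add: sup_fun_def sup_int_def max_def)
qed

lemma finite_Inc:
  fixes R :: "'a::{finite,order} \<Rightarrow> int set"
  assumes "restriction R"
  shows "finite (Inc R)"
proof -
  have fin: "finite (\<Union>p. R p)" using assms unfolding restriction_def by auto
  have "Inc R \<subseteq> {f. \<forall>x. (x \<in> UNIV \<longrightarrow> f x \<in> (\<Union>p. R p)) \<and> (x \<notin> UNIV \<longrightarrow> f x = 0)}"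
    unfolding Inc_def by auto
  moreover have "finite {f. \<forall>x. (x \<in> (UNIV::'a set) \<longrightarrow> f x \<in> (\<Union>p. R p)) \<and> (x \<notin> UNIV \<longrightarrow> f x = (0::int))}"
    by (rule finite_set_of_finite_funs) (use fin in auto)
  ultimately show ?thesis by (rule finite_subset)
qed

theorem proposition2p9:
  fixes R :: "'a::{finite,order} \<Rightarrow> int set"
  assumes "restriction R"
    and "consistent R"
  shows "\<exists>h. bij_betw h {x. meet_irreducible (Inc R) x}
                        {(p, k). k \<in> R p - {Max (R p)}}"
proof -
  have finR: "\<And>p. finite (R p)" and neR: "\<And>p. R p \<noteq> {}"
    using assms(1) unfolding restriction_def by auto
  have minmono: "\<And>x y. x < y \<Longrightarrow> Min (R x) < Min (R y)"
    using chain_mono[of "\<lambda>x. Min (R x)"] assms(2) unfolding consistent_def by blast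
  have maxmono: "\<And>x y. x < y \<Longrightarrow> Max (R x) < Max (R y)"
    using chain_mono[of "\<lambda>x. Max (R x)"] assms(2) unfolding consistent_def by blast
  have minle: "\<And>p k. k \<in> R p \<Longrightarrow> Min (R p) \<le> k" using finR by auto
  have lemax: "\<And>p k. k \<in> R p \<Longrightarrow> k \<le> Max (R p)" using finR by auto
  have minin: "\<And>p. Min (R p) \<in> R p" using finR neR by auto
  have maxin: "\<And>p. Max (R p) \<in> R p" using finR neR by auto
  have wit: "\<exists>f\<in>Inc R. f p = k \<and> (\<forall>y. p < y \<longrightarrow> f y = Max (R y))" if k: "k \<in> R p" for p k
  proof -
    define f where "f y = (if y = p then k else if p < y then Max (R y) else Min (R y))" for y
    have "f \<in> Inc R"
      unfolding Inc_def
    proof (intro CollectI conjI allI impI)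
      fix y show "f y \<in> R y" using k maxin minin unfolding f_def by auto
    next
      fix x y :: 'a assume xy: "x < y"
      show "f x < f y"
      proof (cases "x = p")
        case True
        then have "p < y" "y \<noteq> p" using xy by auto
        then show ?thesis using True lemax[OF k] maxmono[of p y] unfolding f_def by auto
      next
        case xp: False
        show ?thesis
        proof (cases "p < x")
          case True
          then have "p < y" "y \<noteq> p" using xy by auto
          then show ?thesis using True xp maxmono[OF xy] unfolding f_def by auto
        next
          case npx: False
          show ?thesis
          proof (cases "y = p")
            case True then show ?thesis using xp npx minmono[OF xy] minle[OF k] unfolding f_def by auto
          next
            case yp: False
            show ?thesis
            proof (cases "p < y")
              case True
              have "Min (R y) \<le> Max (R y)" using minle maxin by blast
              then show ?thesis using True xp npx yp minmono[OF xy] unfolding f_def by auto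
            next
              case False
              then show ?thesis using xp npx yp minmono[OF xy] unfolding f_def by auto
            qed
          qed
        qed
      qed
    qed
    moreover have "f p = k" "\<forall>y. p < y \<longrightarrow> f y = Max (R y)" unfolding f_def by auto
    ultimately show ?thesis by blast
  qed
  have valR: "\<And>f x. f \<in> Inc R \<Longrightarrow> f x \<in> R x" unfolding Inc_def by auto
  have monoI: "\<And>f x y. f \<in> Inc R \<Longrightarrow> x < y \<Longrightarrow> f x < f y" unfolding Inc_def by auto
  have MI_unique: "\<exists>!p. raisable R m p" if mi: "meet_irreducible (Inc R) m" for m
  proof -
    have m: "m \<in> Inc R" using mi unfolding meet_irreducible_def by auto
    obtain y where y: "y \<in> Inc R" "\<not> y \<le> m" using mi unfolding meet_irreducible_def by auto
    have "m \<noteq> sup m y"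
    proof
      assume eq: "m = sup m y"
      have "y \<le> m" by (subst eq) (rule sup.cobounded2)
      then show False using y(2) by simp
    qed
    then obtain x where "m x < sup m y x" "m(x := sup m y x) \<in> Inc R"
      using one_coord[OF m Inc_sup[OF m y(1)]] by auto
    then have ex: "raisable R m x" unfolding raisable_def by auto
    have un: "x1 = x2" if r1: "raisable R m x1" and r2: "raisable R m x2" for x1 x2
    proof (rule ccontr)
      assume ne: "x1 \<noteq> x2"
      obtain v1 where v1: "m x1 < v1" "m(x1 := v1) \<in> Inc R" using r1 unfolding raisable_def by auto
      obtain v2 where v2: "m x2 < v2" "m(x2 := v2) \<in> Inc R" using r2 unfolding raisable_def by auto
      have "m = inf (m(x1 := v1)) (m(x2 := v2))"
        using v1 v2 ne by (auto simp: inf_fun_def fun_eq_iff inf_int_def)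
      then have "m = m(x1 := v1) \<or> m = m(x2 := v2)"
        using mi v1 v2 unfolding meet_irreducible_def by blast
      then show False
      proof
        assume "m = m(x1 := v1)"
        then have "m x1 = v1" by (metis fun_upd_same)
        then show False using v1(1) by simp
      next
        assume "m = m(x2 := v2)"
        then have "m x2 = v2" by (metis fun_upd_same)
        then show False using v2(1) by simp
      qed
    qed
    show ?thesis using ex un by blast
  qed
  have unique_MI: "meet_irreducible (Inc R) m"
    if m: "m \<in> Inc R" and rp: "raisable R m p" and u: "\<And>x. raisable R m x \<Longrightarrow> x = p" for m p
  proof -
    obtain v where v: "m p < v" "m(p := v) \<in> Inc R" using rp unfolding raisable_def by auto
    have nt: "\<not> (\<forall>y\<in>Inc R. y \<le> m)"
    proof
      assume "\<forall>y\<in>Inc R. y \<le> m"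
      then have "m(p := v) \<le> m" using v by blast
      then show False using le_funD[of "m(p := v)" m p] v by simp
    qed
    have irr: "m = y \<or> m = z" if y: "y \<in> Inc R" and z: "z \<in> Inc R" and e: "m = inf y z" for y z
    proof (rule ccontr)
      assume "\<not> (m = y \<or> m = z)"
      then have ny: "m \<noteq> y" and nz: "m \<noteq> z" by auto
      have "m \<le> y" "m \<le> z" using e by auto
      have "\<not> y p \<le> m p"
      proof
        assume "y p \<le> m p"
        then have "y \<le> m" using unique_max[OF m u y] by blast
        then show False using \<open>m \<le> y\<close> ny by auto
      qed
      moreover have "\<not> z p \<le> m p"
      proof
        assume "z p \<le> m p"
        then have "z \<le> m" using unique_max[OF m u z] by blast
        then show False using \<open>m \<le> z\<close> nz by auto
      qed
      moreover have "m p = min (y p) (z p)" using e by (simp add: inf_fun_def inf_int_def)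
      ultimately show False by linarith
    qed
    show ?thesis unfolding meet_irreducible_def using m nt irr by blast
  qed
  define h where "h m = ((THE p. raisable R m p), m (THE p. raisable R m p))" for m
  have hval: "h m = (p, m p) \<and> raisable R m p \<and> (\<forall>x. raisable R m x \<longrightarrow> x = p)"
    if mi: "meet_irreducible (Inc R) m" and rp: "raisable R m p" for m p
  proof -
    have "(THE p. raisable R m p) = p" using MI_unique[OF mi] rp by (rule the1_equality)
    then show ?thesis unfolding h_def using MI_unique[OF mi] rp by auto
  qed
  have "bij_betw h {x. meet_irreducible (Inc R) x} {(p, k). k \<in> R p - {Max (R p)}}"
    unfolding bij_betw_def
  proof (intro conjI)
    show "inj_on h {x. meet_irreducible (Inc R) x}"
    proof (rule inj_onI)
      fix m m' assume m: "m \<in> {x. meet_irreducible (Inc R) x}" and m': "m' \<in> {x. meet_irreducible (Inc R) x}"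
        and eq: "h m = h m'"
      have mi: "meet_irreducible (Inc R) m" using m by simp
      have mi': "meet_irreducible (Inc R) m'" using m' by simp
      obtain p where p: "raisable R m p" using MI_unique[OF mi] by blast
      obtain p' where p': "raisable R m' p'" using MI_unique[OF mi'] by blast
      have hv: "h m = (p, m p) \<and> raisable R m p \<and> (\<forall>x. raisable R m x \<longrightarrow> x = p)" by (rule hval[OF mi p])
      have hv': "h m' = (p', m' p') \<and> raisable R m' p' \<and> (\<forall>x. raisable R m' x \<longrightarrow> x = p')" by (rule hval[OF mi' p'])
      have e1: "h m = (p, m p)" using hv by (rule conjunct1)
      have e2: "h m' = (p', m' p')" using hv' by (rule conjunct1)
      from eq have "(p, m p) = (p', m' p')" unfolding e1 e2 .
      then have pp: "p' = p" "m' p = m p" by auto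
      have mI: "m \<in> Inc R" "m' \<in> Inc R" using mi mi' unfolding meet_irreducible_def by auto
      have u1: "\<And>x. raisable R m x \<Longrightarrow> x = p" using hv by blast
      have u2: "\<And>x. raisable R m' x \<Longrightarrow> x = p" using hv' pp by blast
      have "m \<le> m'" using unique_max[OF mI(2) u2 mI(1)] pp by simp
      moreover have "m' \<le> m" using unique_max[OF mI(1) u1 mI(2)] pp by simp
      ultimately show "m = m'" by (rule order_antisym)
    qed
  next
    show "h ` {x. meet_irreducible (Inc R) x} = {(p, k). k \<in> R p - {Max (R p)}}"
    proof (intro equalityI subsetI)
      fix a assume "a \<in> h ` {x. meet_irreducible (Inc R) x}"
      then obtain m where mi: "meet_irreducible (Inc R) m" and a: "a = h m" by auto
      obtain p where p: "raisable R m p" using MI_unique mi by blast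
      have "a = (p, m p)" using hval[OF mi p] a by auto
      moreover have mI: "m \<in> Inc R" using mi unfolding meet_irreducible_def by auto
      obtain v where v: "m p < v" "m(p := v) \<in> Inc R" using p unfolding raisable_def by auto
      have "v \<in> R p" using valR[OF v(2), of p] by simp
      then have "v \<le> Max (R p)" by (rule lemax)
      then have "m p \<noteq> Max (R p)" using v(1) by auto
      moreover have "m p \<in> R p" using valR[OF mI] .
      ultimately show "a \<in> {(p, k). k \<in> R p - {Max (R p)}}" by auto
    next
      fix a assume "a \<in> {(p, k). k \<in> R p - {Max (R p)}}"
      then obtain p k where a: "a = (p, k)" and k: "k \<in> R p" and kM: "k \<noteq> Max (R p)" by auto
      have kl: "k < Max (R p)" using lemax[OF k] kM by auto
      obtain f0 where f0: "f0 \<in> Inc R" "f0 p = k" "\<forall>y. p < y \<longrightarrow> f0 y = Max (R y)"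
        using wit[OF k] by blast
      let ?S = "{f \<in> Inc R. f p \<le> k}"
      have finS: "finite ?S" using finite_Inc[OF assms(1)] by auto
      have "f0 \<in> ?S" using f0 by auto
      then obtain m where mS: "m \<in> ?S" and mx: "\<forall>b\<in>?S. m \<le> b \<longrightarrow> m = b"
        using finite_has_maximal[OF finS] by blast
      have mI: "m \<in> Inc R" and mp: "m p \<le> k" using mS by auto
      have big: "f \<le> m" if "f \<in> ?S" for f
      proof -
        have "sup m f \<in> Inc R" using that mS Inc_sup by blast
        moreover have "sup m f p \<le> k" using that mS by (simp add: sup_int_def)
        ultimately have "sup m f \<in> ?S" by blast
        moreover have "m \<le> sup m f" by simp
        ultimately have eq: "m = sup m f" using mx by blast
        show ?thesis by (subst eq) (rule sup.cobounded2)
      qed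
      have "f0 \<le> m" using big \<open>f0 \<in> ?S\<close> by blast
      then have "f0 p \<le> m p" by (rule le_funD)
      then have mpk: "m p = k" using mp f0(2) by auto
      have mtop: "m y = Max (R y)" if "p < y" for y
      proof -
        have "f0 y \<le> m y" using \<open>f0 \<le> m\<close> by (rule le_funD)
        moreover have "m y \<le> Max (R y)" using valR[OF mI] by (rule lemax)
        ultimately show ?thesis using f0(3) that by auto
      qed
      have rp: "raisable R m p"
        unfolding raisable_def
      proof (intro exI conjI)
        show "m p < Max (R p)" using mpk kl by simp
        show "m(p := Max (R p)) \<in> Inc R"
          unfolding Inc_def
        proof (intro CollectI conjI allI impI)
          fix y show "(m(p := Max (R p))) y \<in> R y" using valR[OF mI] maxin by auto
        next
          fix x y :: 'a assume xy: "x < y"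
          show "(m(p := Max (R p))) x < (m(p := Max (R p))) y"
          proof (cases "x = p")
            case True
            then have "y \<noteq> p" "p < y" using xy by auto
            then show ?thesis using True mtop[of y] maxmono[of p y] by simp
          next
            case False
            show ?thesis
            proof (cases "y = p")
              case True then show ?thesis using False xy monoI[OF mI xy] mpk kl by auto
            next
              case False2: False then show ?thesis using False monoI[OF mI xy] by auto
            qed
          qed
        qed
      qed
      have u: "x = p" if rx: "raisable R m x" for x
      proof (rule ccontr)
        assume xp: "x \<noteq> p"
        obtain v where v: "m x < v" "m(x := v) \<in> Inc R" using rx unfolding raisable_def by blast
        have "m(x := v) \<in> ?S" using v xp mp by auto
        then have "m(x := v) \<le> m" using big by blast
        then have "v \<le> m x" using le_funD[of "m(x := v)" m x] by simp
        then show False using v by simp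
      qed
      have mi: "meet_irreducible (Inc R) m" using unique_MI[OF mI rp u] .
      have "h m = (p, m p)" using hval[OF mi rp] by auto
      then have "h m = a" using a mpk by simp
      then show "a \<in> h ` {x. meet_irreducible (Inc R) x}" using mi by blast
    qed
  qed
  then show ?thesis by blast
qed

end
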